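(* For every hypothesis class $\mathcal{H}\subseteq\{0,1\}^{\mathcal{X}}$, $\mathtt{LD}(\mathcal{H})\le\mathtt{CD}(\mathcal{H})$.
   Context: A dataset of size $m$ is $S=((x_1,y_1),\dots,(x_m,y_m))\in(\mathcal{X}\times\{0,1\})^m$; it is $\mathcal{H}$-realizable if some $h\in\mathcal{H}$ satisfies $h(x_i)=y_i$ for all $i$. $G_m(\mathcal{H})$ is the graph on realizable datasets of size $m$ with $S,S'$ adjacent iff there is $x$ with $(x,0)$ appearing in $S$ and $(x,1)$ appearing in $S'$; $\omega_m$ is its clique number; $\mathtt{CD}(\mathcal{H})=\sup\{m:\omega_m=2^m\}\in\mathbb{N}\cup\{\infty\}$. A mistake tree is a complete binary tree whose internal nodes are labeled by points of $\mathcal{X}$, each internal node having one outgoing edge labeled $0$ and one labeled $1$; a root-to-leaf path yields the sequence $(x_1,y_1),\dots,(x_d,y_d)$ of node labels and edge labels. $\mathcal{H}$ shatters the tree if every root-to-leaf path is realizable by $\mathcal{H}$. $\mathtt{LD}(\mathcal{H})$ is the largest $d$ such that a complete mistake tree of depth $d$ is shattered by $\mathcal{H}$ ($\infty$ if arbitrarily deep ones exist). *)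

theory Defs
  imports Main "HOL-Library.Extended_Nat"
begin

text \<open>Hypotheses are functions X => bool (False = label 0, True = label 1);
a hypothesis class is a set of such functions. Datasets are lists of labelled points.\<close>

definition realizable :: "('x \<Rightarrow> bool) set \<Rightarrow> ('x \<times> bool) list \<Rightarrow> bool" where
  "realizable H S \<longleftrightarrow> (\<exists>h\<in>H. \<forall>(x, y)\<in>set S. h x = y)"

text \<open>Vertices of G_m(H): realizable datasets of size m.\<close>
definition datasets :: "('x \<Rightarrow> bool) set \<Rightarrow> nat \<Rightarrow> ('x \<times> bool) list set" where
  "datasets H m = {S. length S = m \<and> realizable H S}"

text \<open>Adjacency in G_m(H) (undirected): some point appears labelled 0 in one and 1 in the other.\<close>
definition adjacent :: "('x \<times> bool) list \<Rightarrow> ('x \<times> bool) list \<Rightarrow> bool" where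
  "adjacent S S' \<longleftrightarrow> (\<exists>x. ((x, False) \<in> set S \<and> (x, True) \<in> set S') \<or>
                            ((x, True) \<in> set S \<and> (x, False) \<in> set S'))"

definition is_clique :: "('x \<Rightarrow> bool) set \<Rightarrow> nat \<Rightarrow> ('x \<times> bool) list set \<Rightarrow> bool" where
  "is_clique H m C \<longleftrightarrow> C \<subseteq> datasets H m \<and>
     (\<forall>S\<in>C. \<forall>S'\<in>C. S \<noteq> S' \<longrightarrow> adjacent S S')"

definition clique_number :: "('x \<Rightarrow> bool) set \<Rightarrow> nat \<Rightarrow> enat" where
  "clique_number H m = Sup {enat (card C) | C. finite C \<and> is_clique H m C}"

definition CD :: "('x \<Rightarrow> bool) set \<Rightarrow> enat" where
  "CD H = Sup {enat m | m. clique_number H m = enat (2 ^ m)}"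

datatype 'x mtree = Leaf | Node 'x "'x mtree" "'x mtree"

fun complete_depth :: "'x mtree \<Rightarrow> nat \<Rightarrow> bool" where
  "complete_depth Leaf d = (d = 0)"
| "complete_depth (Node x t0 t1) d =
     (\<exists>d'. d = Suc d' \<and> complete_depth t0 d' \<and> complete_depth t1 d')"

fun paths :: "'x mtree \<Rightarrow> ('x \<times> bool) list set" where
  "paths Leaf = {[]}"
| "paths (Node x t0 t1) = ((#) (x, False)) ` paths t0 \<union> ((#) (x, True)) ` paths t1"

definition shatters :: "('x \<Rightarrow> bool) set \<Rightarrow> 'x mtree \<Rightarrow> bool" where
  "shatters H T \<longleftrightarrow> (\<forall>p\<in>paths T. realizable H p)"

definition LD :: "('x \<Rightarrow> bool) set \<Rightarrow> enat" where
  "LD H = Sup {enat d | d. \<exists>T. complete_depth T d \<and> shatters H T}"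

end

theory Submission
  imports Defs
begin

lemma paths_props:
  "complete_depth T d \<Longrightarrow> finite (paths T) \<and> card (paths T) = 2 ^ d \<and> (\<forall>p\<in>paths T. length p = d)"
proof (induction T arbitrary: d)
  case Leaf then show ?case by simp
next
  case (Node x t0 t1)
  then obtain d' where d: "d = Suc d'" "complete_depth t0 d'" "complete_depth t1 d'" by auto
  have i0: "finite (paths t0) \<and> card (paths t0) = 2 ^ d' \<and> (\<forall>p\<in>paths t0. length p = d')"
    using Node.IH(1) d by blast
  have i1: "finite (paths t1) \<and> card (paths t1) = 2 ^ d' \<and> (\<forall>p\<in>paths t1. length p = d')"
    using Node.IH(2) d by blast
  have disj: "((#) (x, False)) ` paths t0 \<inter> ((#) (x, True)) ` paths t1 = {}" by auto
  have c0: "card (((#) (x, False)) ` paths t0) = 2 ^ d'"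
    using i0 by (simp add: card_image)
  have c1: "card (((#) (x, True)) ` paths t1) = 2 ^ d'"
    using i1 by (simp add: card_image)
  have "card (paths (Node x t0 t1)) = 2 ^ d' + 2 ^ d'"
    using card_Un_disjoint[OF _ _ disj] i0 i1 c0 c1 by simp
  then show ?case using i0 i1 d by auto
qed

lemma adjacent_mono: "adjacent p q \<Longrightarrow> adjacent (a # p) (a # q)"
  unfolding adjacent_def by auto

lemma paths_adj: "p \<in> paths T \<Longrightarrow> q \<in> paths T \<Longrightarrow> p \<noteq> q \<Longrightarrow> adjacent p q"
proof (induction T arbitrary: p q)
  case Leaf then show ?case by simp
next
  case (Node x t0 t1)
  from Node.prems(1,2) consider
      (a) p' q' where "p = (x,False)#p'" "q = (x,False)#q'" "p' \<in> paths t0" "q' \<in> paths t0"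
    | (b) p' q' where "p = (x,True)#p'" "q = (x,True)#q'" "p' \<in> paths t1" "q' \<in> paths t1"
    | (c) p' q' where "p = (x,False)#p'" "q = (x,True)#q'"
    | (d) p' q' where "p = (x,True)#p'" "q = (x,False)#q'"
    by auto
  then show ?case
  proof cases
    case a then show ?thesis using Node.IH(1)[of p' q'] Node.prems(3) adjacent_mono by auto
  next
    case b then show ?thesis using Node.IH(2)[of p' q'] Node.prems(3) adjacent_mono by auto
  next
    case c then show ?thesis unfolding adjacent_def by auto
  next
    case d then show ?thesis unfolding adjacent_def by auto
  qed
qed

lemma clique_card_le:
  assumes fin: "finite C" and cl: "is_clique H m C"
  shows "card C \<le> 2 ^ m"
proof -
  define P where "P = (\<Union>S\<in>C. fst ` set S)"
  have finP: "finite P" unfolding P_def using fin by auto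
  define A where "A S = {T. T \<subseteq> P \<and> (\<forall>(x,y)\<in>set S. (x\<in>T) = y)}" for S
  have finA: "finite (A S)" for S
    by (rule finite_subset[of _ "Pow P"]) (auto simp: A_def finP)
  have disj: "A S \<inter> A S' = {}" if "S \<in> C" "S' \<in> C" "S \<noteq> S'" for S S'
  proof -
    have "adjacent S S'" using cl that unfolding is_clique_def by blast
    then obtain x where x: "((x, False) \<in> set S \<and> (x, True) \<in> set S') \<or>
                            ((x, True) \<in> set S \<and> (x, False) \<in> set S')"
      unfolding adjacent_def by blast
    show ?thesis
    proof (rule ccontr)
      assume "A S \<inter> A S' \<noteq> {}"
      then obtain T where "T \<in> A S" "T \<in> A S'" by blast
      then have "\<forall>(x,y)\<in>set S. (x\<in>T) = y" "\<forall>(x,y)\<in>set S'. (x\<in>T) = y"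
        unfolding A_def by auto
      then show False using x by auto
    qed
  qed
  have big: "2 ^ (card P - m) \<le> card (A S)" if S: "S \<in> C" for S
  proof -
    have "S \<in> datasets H m" using cl S unfolding is_clique_def by blast
    then obtain h where len: "length S = m" and h: "\<forall>(x,y)\<in>set S. h x = y"
      unfolding datasets_def realizable_def by blast
    define pts where "pts = fst ` set S"
    define Tr where "Tr = {x. (x,True) \<in> set S}"
    have ptsP: "pts \<subseteq> P" unfolding pts_def P_def using S by blast
    have Trpts: "Tr \<subseteq> pts" unfolding Tr_def pts_def by force
    have cons: "(x,True) \<in> set S \<longleftrightarrow> y" if "(x,y) \<in> set S" for x y
    proof -
      have hy: "h x = y" using h that by auto
      show ?thesis
      proof
        assume "(x,True) \<in> set S"
        then have "h x = True" using h by auto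
        then show y using hy by simp
      next
        assume y
        then show "(x,True) \<in> set S" using that by simp
      qed
    qed
    have cardpts: "card pts \<le> m" unfolding pts_def using len
      using card_image_le[of "set S" fst] card_length[of S] by simp
    have inj: "inj_on (\<lambda>U. U \<union> Tr) (Pow (P - pts))"
    proof (rule inj_onI)
      fix U V assume "U \<in> Pow (P - pts)" "V \<in> Pow (P - pts)" "U \<union> Tr = V \<union> Tr"
      then show "U = V" using Trpts by blast
    qed
    have img: "(\<lambda>U. U \<union> Tr) ` Pow (P - pts) \<subseteq> A S"
    proof
      fix T assume "T \<in> (\<lambda>U. U \<union> Tr) ` Pow (P - pts)"
      then obtain U where U: "U \<subseteq> P - pts" "T = U \<union> Tr" by auto
      have "T \<subseteq> P" using U Trpts ptsP by blast
      moreover have "(x \<in> T) = y" if "(x,y) \<in> set S" for x y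
      proof -
        have "x \<in> pts" using that unfolding pts_def by force
        then have "x \<notin> U" using U by blast
        then show ?thesis using U cons[OF that] unfolding Tr_def by auto
      qed
      ultimately show "T \<in> A S" unfolding A_def by auto
    qed
    have "card (Pow (P - pts)) \<le> card (A S)"
      using card_inj_on_le[OF inj img finA] .
    moreover have "card (Pow (P - pts)) = 2 ^ (card P - card pts)"
      using finP ptsP by (simp add: card_Pow card_Diff_subset finite_subset)
    moreover have "(2::nat) ^ (card P - m) \<le> 2 ^ (card P - card pts)"
      using cardpts by (intro power_increasing) auto
    ultimately show ?thesis by linarith
  qed
  have "card C * 2 ^ (card P - m) = (\<Sum>S\<in>C. 2 ^ (card P - m))" by simp
  also have "\<dots> \<le> (\<Sum>S\<in>C. card (A S))" using big by (intro sum_mono) auto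
  also have "\<dots> = card (\<Union>S\<in>C. A S)"
    using card_UN_disjoint[OF fin, of A] finA disj by auto
  also have "\<dots> \<le> card (Pow P)"
    by (rule card_mono) (auto simp: finP A_def)
  also have "\<dots> = 2 ^ card P" using finP by (simp add: card_Pow)
  finally have ineq: "card C * 2 ^ (card P - m) \<le> 2 ^ card P" .
  show ?thesis
  proof (cases "card P \<le> m")
    case True
    then have "card C \<le> 2 ^ card P" using ineq by simp
    also have "\<dots> \<le> 2 ^ m" using True by (intro power_increasing) auto
    finally show ?thesis .
  next
    case False
    then have "(2::nat) ^ card P = 2 ^ m * 2 ^ (card P - m)"
      by (simp add: power_add[symmetric])
    then show ?thesis using ineq by simp
  qed
qed

lemma shattered_clique:
  assumes "complete_depth T d" "shatters H T"
  shows "clique_number H d = enat (2 ^ d)"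
proof -
  have pp: "finite (paths T) \<and> card (paths T) = 2 ^ d \<and> (\<forall>p\<in>paths T. length p = d)"
    using paths_props[OF assms(1)] .
  have cl: "is_clique H d (paths T)"
    unfolding is_clique_def datasets_def using pp assms(2) paths_adj
    unfolding shatters_def by blast
  have "enat (2 ^ d) \<in> {enat (card C) | C. finite C \<and> is_clique H d C}"
    using pp cl by force
  then have ge: "enat (2 ^ d) \<le> clique_number H d"
    unfolding clique_number_def by (rule Sup_upper)
  have le: "clique_number H d \<le> enat (2 ^ d)"
    unfolding clique_number_def using clique_card_le
    by (intro Sup_least) auto
  show ?thesis using ge le by simp
qed

theorem mainTheorem9:
  fixes H :: "('x \<Rightarrow> bool) set"
  shows "LD H \<le> CD H"
  unfolding LD_def CD_def
  by (rule Sup_subset_mono) (auto dest: shattered_clique)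

end
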